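(* There is no uncountable set $\mathcal{S}$ of Turing degrees such that $\mathbb{R}_{\mathcal{S}}$ is $|\mathcal{S}|$-$2$-entangled.
   Context: $\mathbb{R}_{\mathcal{S}}$ is the set of reals whose Turing degree lies in $\mathcal{S}$. For $\aleph_0<\kappa\le 2^{\aleph_0}$, a set $A\subseteq\mathbb{R}$ is $\kappa$-$2$-entangled if $|A|\ge\kappa$ and for every collection of $\kappa$ many pairwise disjoint pairs of elements of $A$ (pairs $(x_\alpha,y_\alpha)$ with $x_\alpha\ne y_\alpha$ and $\{x_\alpha,y_\alpha\}\cap\{x_\beta,y_\beta\}=\emptyset$ for $\alpha\ne\beta$) there are pairs $(x_1,y_1),(x_2,y_2)$ in the collection with $x_1<x_2,y_1<y_2$ and pairs $(w_1,z_1),(w_2,z_2)$ in the collection with $w_1<w_2$, $z_1>z_2$. *)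

theory Defs
  imports Complex_Main "HOL-Library.Equipollence" "HOL-Library.Nat_Bijection" "HOL-Library.Countable_Set"
begin

fun prec :: "(nat list \<Rightarrow> nat option) \<Rightarrow> (nat list \<Rightarrow> nat option) \<Rightarrow> nat \<Rightarrow> nat list \<Rightarrow> nat option" where
  "prec f g 0 xs = f xs"
| "prec f g (Suc y) xs = (case prec f g y xs of None \<Rightarrow> None | Some r \<Rightarrow> g (y # r # xs))"

definition mu_op :: "(nat list \<Rightarrow> nat option) \<Rightarrow> nat list \<Rightarrow> nat option" where
  "mu_op f xs = (if \<exists>y. f (y # xs) = Some 0 \<and> (\<forall>z<y. \<exists>r. f (z # xs) = Some r \<and> r \<noteq> 0)
     then Some (LEAST y. f (y # xs) = Some 0 \<and> (\<forall>z<y. \<exists>r. f (z # xs) = Some r \<and> r \<noteq> 0))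
     else None)"

inductive orec :: "nat set \<Rightarrow> nat \<Rightarrow> (nat list \<Rightarrow> nat option) \<Rightarrow> bool" for B where
  zero: "orec B n (\<lambda>xs. Some 0)"
| succ: "orec B 1 (\<lambda>xs. Some (Suc (hd xs)))"
| proj: "i < n \<Longrightarrow> orec B n (\<lambda>xs. Some (xs ! i))"
| oracle_query: "orec B 1 (\<lambda>xs. Some (if hd xs \<in> B then 1 else 0))"
| comp: "orec B m g \<Longrightarrow> length fs = m \<Longrightarrow> (\<forall>f\<in>set fs. orec B n f) \<Longrightarrow>
     orec B n (\<lambda>xs. if (\<forall>f\<in>set fs. f xs \<noteq> None) then g (map (\<lambda>f. the (f xs)) fs) else None)"
| prim_rec: "orec B n f \<Longrightarrow> orec B (n + 2) g \<Longrightarrow> orec B (n + 1) (\<lambda>xs. prec f g (hd xs) (tl xs))"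
| minim: "orec B (n + 1) f \<Longrightarrow> orec B n (mu_op f)"

definition turing_le :: "nat set \<Rightarrow> nat set \<Rightarrow> bool" where
  "turing_le A B \<longleftrightarrow> (\<exists>f. orec B 1 f \<and> (\<forall>k. f [k] = Some (if k \<in> A then 1 else 0)))"

definition tdeg :: "nat set \<Rightarrow> nat set set" where
  "tdeg A = {C. turing_le C A \<and> turing_le A C}"

text \<open>Turing degrees are the elements of range tdeg.\<close>

text \<open>The (lower) Dedekind cut of a real, coded by natural numbers: n codes the
  rational (a - b)/(c + 1) where n = prod_encode (a, prod_encode (b, c)).\<close>
definition rat_code :: "nat \<Rightarrow> real" where
  "rat_code n = (case prod_decode n of (a, m) \<Rightarrow> (case prod_decode m of (b, c) \<Rightarrow>
       (real a - real b) / (real c + 1)))"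

definition real_cut :: "real \<Rightarrow> nat set" where
  "real_cut x = {n. rat_code n < x}"

definition rdeg :: "real \<Rightarrow> nat set set" where
  "rdeg x = tdeg (real_cut x)"

definition reals_of_degrees :: "nat set set set \<Rightarrow> real set" where
  "reals_of_degrees S = {x. rdeg x \<in> S}"

text \<open>kappa-2-entangled, with kappa given as the cardinality of the set K.\<close>
definition entangled2 :: "'b set \<Rightarrow> real set \<Rightarrow> bool" where
  "entangled2 K A \<longleftrightarrow> K \<lesssim> A \<and>
    (\<forall>C :: (real \<times> real) set. C \<subseteq> A \<times> A \<longrightarrow> C \<approx> K \<longrightarrow>
       (\<forall>c\<in>C. fst c \<noteq> snd c) \<longrightarrow>
       (\<forall>c\<in>C. \<forall>d\<in>C. c \<noteq> d \<longrightarrow> {fst c, snd c} \<inter> {fst d, snd d} = {}) \<longrightarrow>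
       (\<exists>x1 y1 x2 y2. (x1, y1) \<in> C \<and> (x2, y2) \<in> C \<and> x1 < x2 \<and> y1 < y2) \<and>
       (\<exists>w1 z1 w2 z2. (w1, z1) \<in> C \<and> (w2, z2) \<in> C \<and> w1 < w2 \<and> z1 > z2))"

end

theory Submission
  imports Defs
begin


definition comp_on :: "nat set \<Rightarrow> nat \<Rightarrow> (nat list \<Rightarrow> nat) \<Rightarrow> bool" where
  "comp_on B n F \<longleftrightarrow> (\<exists>f. orec B n f \<and> (\<forall>xs. length xs = n \<longrightarrow> f xs = Some (F xs)))"

lemma co_cong: "comp_on B n F \<Longrightarrow> (\<And>xs. length xs = n \<Longrightarrow> F xs = F' xs) \<Longrightarrow> comp_on B n F'"
  unfolding comp_on_def by metis

lemma co_cong': "comp_on B m F \<Longrightarrow> m = n \<Longrightarrow> (\<And>xs. length xs = n \<Longrightarrow> F xs = F' xs) \<Longrightarrow> comp_on B n F'"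
  unfolding comp_on_def by metis

lemma co_zero: "comp_on B n (\<lambda>_. 0)"
  unfolding comp_on_def using orec.zero by blast

lemma co_succ: "comp_on B 1 (\<lambda>xs. Suc (xs!0))"
proof -
  have "length xs = 1 \<Longrightarrow> hd xs = xs!0" for xs :: "nat list" by (cases xs) auto
  then show ?thesis unfolding comp_on_def using orec.succ[of B] by force
qed

lemma co_proj: "i < n \<Longrightarrow> comp_on B n (\<lambda>xs. xs!i)"
  unfolding comp_on_def using orec.proj by blast

lemma co_oracle: "comp_on B 1 (\<lambda>xs. if xs!0 \<in> B then 1 else 0)"
proof -
  have "length xs = 1 \<Longrightarrow> hd xs = xs!0" for xs :: "nat list" by (cases xs) auto
  then show ?thesis unfolding comp_on_def using orec.oracle_query[of B] by force
qed

lemma co_comp: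
  assumes G: "comp_on B m G" and len: "length Fs = m" and Fs: "\<forall>F\<in>set Fs. comp_on B n F"
  shows "comp_on B n (\<lambda>xs. G (map (\<lambda>F. F xs) Fs))"
proof -
  obtain g where g: "orec B m g" "\<And>xs. length xs = m \<Longrightarrow> g xs = Some (G xs)"
    using G unfolding comp_on_def by blast
  from Fs have "\<forall>F\<in>set Fs. \<exists>f. orec B n f \<and> (\<forall>xs. length xs = n \<longrightarrow> f xs = Some (F xs))"
    unfolding comp_on_def by blast
  then obtain c where c: "\<And>F. F \<in> set Fs \<Longrightarrow> orec B n (c F) \<and> (\<forall>xs. length xs = n \<longrightarrow> c F xs = Some (F xs))"
    by metis
  let ?fs = "map c Fs"
  have o: "orec B n (\<lambda>xs. if (\<forall>f\<in>set ?fs. f xs \<noteq> None) then g (map (\<lambda>f. the (f xs)) ?fs) else None)"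
    by (rule orec.comp[OF g(1)]) (use len c in auto)
  show ?thesis unfolding comp_on_def
  proof (rule exI, rule conjI[OF o], intro allI impI)
    fix xs :: "nat list" assume l: "length xs = n"
    have 1: "\<forall>f\<in>set ?fs. f xs \<noteq> None" using c l by auto
    have 2: "map (\<lambda>f. the (f xs)) ?fs = map (\<lambda>F. F xs) Fs" using c l by auto
    show "(if (\<forall>f\<in>set ?fs. f xs \<noteq> None) then g (map (\<lambda>f. the (f xs)) ?fs) else None) = Some (G (map (\<lambda>F. F xs) Fs))"
    proof -
      have "(if (\<forall>f\<in>set ?fs. f xs \<noteq> None) then g (map (\<lambda>f. the (f xs)) ?fs) else None) = g (map (\<lambda>F. F xs) Fs)"
        using 1 2 by presburger
      also have "\<dots> = Some (G (map (\<lambda>F. F xs) Fs))" using g(2) len by simp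
      finally show ?thesis .
    qed
  qed
qed

lemma co_ap1:
  assumes "comp_on B 1 (\<lambda>xs. f (xs!0))" "comp_on B n H"
  shows "comp_on B n (\<lambda>xs. f (H xs))"
  using co_comp[OF assms(1), of "[H]" n] assms(2) by simp

lemma co_ap2:
  assumes "comp_on B 2 (\<lambda>xs. f (xs!0) (xs!1))" "comp_on B n H1" "comp_on B n H2"
  shows "comp_on B n (\<lambda>xs. f (H1 xs) (H2 xs))"
  using co_comp[OF assms(1), of "[H1, H2]" n] assms(2,3) by simp

fun rr :: "(nat list \<Rightarrow> nat) \<Rightarrow> (nat list \<Rightarrow> nat) \<Rightarrow> nat \<Rightarrow> nat list \<Rightarrow> nat" where
  "rr F G 0 ys = F ys"
| "rr F G (Suc y) ys = G (y # rr F G y ys # ys)"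

lemma co_prec:
  assumes F: "comp_on B n F" and G: "comp_on B (n+2) G"
  shows "comp_on B (n+1) (\<lambda>xs. rr F G (hd xs) (tl xs))"
proof -
  obtain f where f: "orec B n f" "\<And>xs. length xs = n \<Longrightarrow> f xs = Some (F xs)"
    using F unfolding comp_on_def by blast
  obtain g where g: "orec B (n+2) g" "\<And>xs. length xs = n+2 \<Longrightarrow> g xs = Some (G xs)"
    using G unfolding comp_on_def by blast
  have p: "length ys = n \<Longrightarrow> prec f g y ys = Some (rr F G y ys)" for y ys
    by (induction y) (auto simp: f g)
  show ?thesis unfolding comp_on_def
    using orec.prim_rec[OF f(1) g(1)] by (auto simp: p)
qed

lemma len_hd: "length xs = Suc n \<Longrightarrow> hd xs = xs!0"
  by (cases xs) auto
lemma len_tl: "length xs = Suc n \<Longrightarrow> tl xs ! i = xs ! Suc i"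
  by (cases xs) auto

lemma rr_add: "rr (\<lambda>ys. ys!0) (\<lambda>ys. Suc (ys!Suc 0)) y ys = y + ys!0"
  by (induction y) auto

lemma co_add2: "comp_on B 2 (\<lambda>xs. xs!0 + xs!1)"
proof -
  have "comp_on B (1+1) (\<lambda>xs. rr (\<lambda>ys. ys!0) (\<lambda>ys. Suc (ys!1)) (hd xs) (tl xs))"
    by (rule co_prec[OF co_proj co_ap1[where f=Suc, OF co_succ co_proj]]) auto
  then show ?thesis
    by (rule co_cong') (auto simp add: numeral_2_eq_2 rr_add len_hd len_tl)
qed

lemma co_add: "comp_on B n H1 \<Longrightarrow> comp_on B n H2 \<Longrightarrow> comp_on B n (\<lambda>xs. H1 xs + H2 xs)"
  using co_ap2[where f="(+)", OF co_add2] .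

lemma rr_pred: "rr (\<lambda>_. 0) (\<lambda>ys. ys!0) y ys = y - 1"
  by (induction y) auto

lemma co_pred1: "comp_on B 1 (\<lambda>xs. xs!0 - 1)"
proof -
  have "comp_on B (0+1) (\<lambda>xs. rr (\<lambda>_. 0) (\<lambda>ys. ys!0) (hd xs) (tl xs))"
    by (rule co_prec[OF co_zero co_proj]) auto
  then show ?thesis
    by (rule co_cong') (auto simp add: numeral_2_eq_2 rr_pred len_hd)
qed

lemma rr_sub: "rr (\<lambda>ys. ys!0) (\<lambda>ys. ys!Suc 0 - Suc 0) y ys = ys!0 - y"
  by (induction y) auto

lemma co_sub2: "comp_on B 2 (\<lambda>xs. xs!1 - xs!0)"
proof -
  have "comp_on B (1+1) (\<lambda>xs. rr (\<lambda>ys. ys!0) (\<lambda>ys. ys!1 - 1) (hd xs) (tl xs))"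
    by (rule co_prec[OF co_proj co_ap1[where f="\<lambda>x. x - 1", OF co_pred1 co_proj]]) auto
  then show ?thesis
    by (rule co_cong') (auto simp add: numeral_2_eq_2 rr_sub len_hd len_tl)
qed

lemma co_sub: "comp_on B n H1 \<Longrightarrow> comp_on B n H2 \<Longrightarrow> comp_on B n (\<lambda>xs. H1 xs - H2 xs)"
  using co_ap2[where f="\<lambda>a b. b - a", OF co_sub2] by blast

lemma co_one: "comp_on B n (\<lambda>_. 1)"
  using co_ap1[where f=Suc, OF co_succ co_zero] by simp

lemma rr_tri: "rr (\<lambda>_. 0) (\<lambda>ys. Suc (ys!0 + ys!Suc 0)) y ys = triangle y"
  by (induction y) auto

lemma co_tri1: "comp_on B 1 (\<lambda>xs. triangle (xs!0))"
proof -
  have "comp_on B 2 (\<lambda>ys. Suc (ys!0 + ys!1))"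
    by (rule co_ap1[where f=Suc, OF co_succ co_add2])
  then have "comp_on B (0+1) (\<lambda>xs. rr (\<lambda>_. 0) (\<lambda>ys. Suc (ys!0 + ys!1)) (hd xs) (tl xs))"
    by (intro co_prec[OF co_zero]) (auto simp: numeral_2_eq_2)
  then show ?thesis
    by (rule co_cong') (auto simp add: numeral_2_eq_2 rr_tri len_hd)
qed

lemma co_tri: "comp_on B n H \<Longrightarrow> comp_on B n (\<lambda>xs. triangle (H xs))"
  using co_ap1[where f=triangle, OF co_tri1] .

lemma tri_mono: "a \<le> b \<Longrightarrow> triangle a \<le> triangle b"
  by (induction b) (auto simp: le_Suc_eq)

lemma tri_ge: "a \<le> triangle a"
  by (induction a) auto

definition s_of :: "nat \<Rightarrow> nat" where
  "s_of n = fst (prod_decode n) + snd (prod_decode n)"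

lemma s_of_bounds: "triangle (s_of n) \<le> n \<and> n < triangle (Suc (s_of n))
   \<and> fst (prod_decode n) = n - triangle (s_of n) \<and> fst (prod_decode n) \<le> s_of n"
proof -
  obtain a m where am: "prod_decode n = (a, m)" by fastforce
  have "n = prod_encode (a, m)" by (metis am prod_decode_inverse)
  then have n: "n = triangle (a + m) + a" by (simp add: prod_encode_def)
  show ?thesis unfolding s_of_def am using n by auto
qed

lemma s_of_le: "s_of m \<le> m"
  using s_of_bounds[of m] tri_ge[of "s_of m"] by linarith

definition cntG :: "nat list \<Rightarrow> nat" where
  "cntG ys = ys!1 + (1 - (triangle (Suc (ys!0)) - ys!2))"

lemma rr_cnt: "rr (\<lambda>_. 0) cntG y ys = min y (s_of (ys!0))"
proof (induction y)
  case 0 then show ?case by simp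
next
  case (Suc y)
  let ?s = "s_of (ys!0)"
  have b: "triangle ?s \<le> ys!0" "ys!0 < triangle (Suc ?s)" using s_of_bounds by blast+
  show ?case
  proof (cases "y < ?s")
    case True
    then have "triangle (Suc y) \<le> ys!0" using tri_mono[of "Suc y" ?s] b by simp
    then show ?thesis using Suc True by (simp add: cntG_def)
  next
    case False
    then have "triangle (Suc y) > ys!0" using tri_mono[of "Suc ?s" "Suc y"] b by simp
    then show ?thesis using Suc False by (simp add: cntG_def)
  qed
qed

lemma co_cntG: "comp_on B 3 cntG"
proof -
  have "comp_on B 3 (\<lambda>ys. ys!1 + (1 - (triangle (Suc (ys!0)) - ys!2)))"
    by (intro co_add co_sub co_one co_tri co_proj co_ap1[where f=Suc, OF co_succ]) auto
  then show ?thesis unfolding cntG_def[abs_def] .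
qed

lemma co_s_of: "comp_on B n H \<Longrightarrow> comp_on B n (\<lambda>xs. s_of (H xs))"
proof -
  assume H: "comp_on B n H"
  have "comp_on B (1+1) (\<lambda>xs. rr (\<lambda>_. 0) cntG (hd xs) (tl xs))"
    by (rule co_prec[OF co_zero]) (use co_cntG[of B] in \<open>simp add: numeral_3_eq_3\<close>)
  then have "comp_on B 2 (\<lambda>xs. (\<lambda>y m. min y (s_of m)) (xs!0) (xs!1))"
    by (rule co_cong') (auto simp: rr_cnt numeral_2_eq_2 len_hd len_tl)
  from co_ap2[OF this H H] show ?thesis
    by (rule co_cong) (simp add: min_absorb2 s_of_le)
qed

lemma co_fst: "comp_on B n H \<Longrightarrow> comp_on B n (\<lambda>xs. fst (prod_decode (H xs)))"
  by (rule co_cong[OF co_sub[OF _ co_tri[OF co_s_of]]]) (auto simp: s_of_bounds)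

lemma co_snd: "comp_on B n H \<Longrightarrow> comp_on B n (\<lambda>xs. snd (prod_decode (H xs)))"
  by (rule co_cong[OF co_sub[OF co_s_of co_fst]]) (auto simp: s_of_def)

lemma co_enc: "comp_on B n H1 \<Longrightarrow> comp_on B n H2 \<Longrightarrow> comp_on B n (\<lambda>xs. prod_encode (H1 xs, H2 xs))"
  by (rule co_cong[OF co_add[OF co_tri[OF co_add]]]) (auto simp: prod_encode_def)

lemma orec_trans:
  assumes "orec A n f" and AB: "turing_le A B"
  shows "\<exists>f'. orec B n f' \<and> (\<forall>xs. length xs = n \<longrightarrow> f' xs = f xs)"
  using assms(1)
proof (induction rule: orec.induct)
  case (zero n) then show ?case using orec.zero by blast
next
  case succ then show ?case using orec.succ by blast
next
  case (proj i n) then show ?case using orec.proj by blast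
next
  case oracle_query
  obtain \<chi> where \<chi>: "orec B 1 \<chi>" "\<And>k. \<chi> [k] = Some (if k \<in> A then 1 else 0)"
    using AB unfolding turing_le_def by blast
  have o: "orec B 1 (\<lambda>xs. if (\<forall>f\<in>set [\<lambda>xs. Some (xs!0)]. f xs \<noteq> None) then \<chi> (map (\<lambda>f. the (f xs)) [\<lambda>xs. Some (xs!0)]) else None)"
    by (rule orec.comp[OF \<chi>(1)]) (auto intro: orec.proj)
  show ?case
  proof (rule exI, rule conjI[OF o], intro allI impI)
    fix xs :: "nat list" assume "length xs = 1"
    then obtain k where "xs = [k]" by (cases xs) auto
    then show "(if (\<forall>f\<in>set [\<lambda>xs. Some (xs!0)]. f xs \<noteq> None) then \<chi> (map (\<lambda>f. the (f xs)) [\<lambda>xs. Some (xs!0)]) else None)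
      = Some (if hd xs \<in> A then 1 else 0)" using \<chi>(2) by simp
  qed
next
  case (comp m g fs n)
  obtain g' where g': "orec B m g'" "\<And>xs. length xs = m \<Longrightarrow> g' xs = g xs" using comp.IH by blast
  from comp have "\<forall>f\<in>set fs. \<exists>f'. orec B n f' \<and> (\<forall>xs. length xs = n \<longrightarrow> f' xs = f xs)" by blast
  then obtain c where c: "\<And>f. f \<in> set fs \<Longrightarrow> orec B n (c f) \<and> (\<forall>xs. length xs = n \<longrightarrow> c f xs = f xs)"
    by metis
  let ?fs = "map c fs"
  have o: "orec B n (\<lambda>xs. if (\<forall>f\<in>set ?fs. f xs \<noteq> None) then g' (map (\<lambda>f. the (f xs)) ?fs) else None)"
    by (rule orec.comp[OF g'(1)]) (use comp c in auto)
  show ?case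
  proof (rule exI, rule conjI[OF o], intro allI impI)
    fix xs :: "nat list" assume l: "length xs = n"
    have 1: "(\<forall>f\<in>set ?fs. f xs \<noteq> None) = (\<forall>f\<in>set fs. f xs \<noteq> None)" using c l by auto
    have 2: "map (\<lambda>f. the (f xs)) ?fs = map (\<lambda>f. the (f xs)) fs" using c l by auto
    show "(if (\<forall>f\<in>set ?fs. f xs \<noteq> None) then g' (map (\<lambda>f. the (f xs)) ?fs) else None) =
      (if (\<forall>f\<in>set fs. f xs \<noteq> None) then g (map (\<lambda>f. the (f xs)) fs) else None)"
      unfolding 1 2 using g'(2) comp by auto
  qed
next
  case (prim_rec n f g)
  obtain f' where f': "orec B n f'" "\<And>xs. length xs = n \<Longrightarrow> f' xs = f xs" using prim_rec.IH by blast
  obtain g' where g': "orec B (n+2) g'" "\<And>xs. length xs = n+2 \<Longrightarrow> g' xs = g xs" using prim_rec.IH by blast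
  have p: "length ys = n \<Longrightarrow> prec f' g' y ys = prec f g y ys" for y ys
    by (induction y) (auto simp: f' g' split: option.split)
  show ?case using orec.prim_rec[OF f'(1) g'(1)] by (auto simp: p)
next
  case (minim n f)
  obtain f' where f': "orec B (n+1) f'" "\<And>xs. length xs = n+1 \<Longrightarrow> f' xs = f xs" using minim.IH by blast
  have "length xs = n \<Longrightarrow> mu_op f' xs = mu_op f xs" for xs
    unfolding mu_op_def using f'(2)[of "_ # xs"] by simp
  then show ?case using orec.minim[OF f'(1)] by blast
qed

lemma turing_le_trans: "turing_le C A \<Longrightarrow> turing_le A B \<Longrightarrow> turing_le C B"
proof -
  assume CA: "turing_le C A" and AB: "turing_le A B"
  obtain f where f: "orec A 1 f" "\<And>k. f [k] = Some (if k \<in> C then 1 else 0)" using CA unfolding turing_le_def by blast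
  obtain f' where "orec B 1 f'" "\<forall>xs. length xs = 1 \<longrightarrow> f' xs = f xs" using orec_trans[OF f(1) AB] by blast
  then show ?thesis unfolding turing_le_def using f(2) by force
qed

lemma tdeg_eq: "turing_le A B \<Longrightarrow> turing_le B A \<Longrightarrow> tdeg A = tdeg B"
  unfolding tdeg_def using turing_le_trans by blast

lemma turing_le_co: "comp_on B 1 F \<Longrightarrow> (\<And>k. F [k] = (if k \<in> A then 1 else 0)) \<Longrightarrow> turing_le A B"
  unfolding comp_on_def turing_le_def by force

definition gdn :: "nat \<Rightarrow> nat" where
  "gdn n = prod_encode (fst (prod_decode n), prod_encode (fst (prod_decode (snd (prod_decode n))) + snd (prod_decode (snd (prod_decode n))) + 1, snd (prod_decode (snd (prod_decode n)))))"

definition gup :: "nat \<Rightarrow> nat" where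
  "gup n = prod_encode (fst (prod_decode n) + snd (prod_decode (snd (prod_decode n))) + 1, snd (prod_decode n))"

lemma rat_code_gdn: "rat_code (gdn n) = rat_code n - 1"
proof -
  obtain a m where am: "prod_decode n = (a, m)" by fastforce
  obtain b c where bc: "prod_decode m = (b, c)" by fastforce
  show ?thesis unfolding gdn_def rat_code_def by (simp add: am bc field_simps)
qed

lemma rat_code_gup: "rat_code (gup n) = rat_code n + 1"
proof -
  obtain a m where am: "prod_decode n = (a, m)" by fastforce
  obtain b c where bc: "prod_decode m = (b, c)" by fastforce
  show ?thesis unfolding gup_def rat_code_def by (simp add: am bc field_simps)
qed

lemma co_gdn: "comp_on B 1 (\<lambda>xs. gdn (xs!0))"
  unfolding gdn_def by (intro co_enc co_fst co_snd co_add co_one co_proj) auto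

lemma co_gup: "comp_on B 1 (\<lambda>xs. gup (xs!0))"
  unfolding gup_def by (intro co_enc co_fst co_snd co_add co_one co_proj) auto

lemma rdeg_shift: "rdeg (x + 1) = rdeg x"
proof -
  have 1: "turing_le (real_cut (x+1)) (real_cut x)"
    by (rule turing_le_co[OF co_ap1[where f="\<lambda>k. if k \<in> real_cut x then 1 else 0", OF co_oracle co_gdn]])
       (simp add: real_cut_def rat_code_gdn)
  have 2: "turing_le (real_cut x) (real_cut (x+1))"
    by (rule turing_le_co[OF co_ap1[where f="\<lambda>k. if k \<in> real_cut (x+1) then 1 else 0", OF co_oracle co_gup]])
       (simp add: real_cut_def rat_code_gup)
  show ?thesis unfolding rdeg_def using tdeg_eq[OF 1 2] by simp
qed



lemma lepoll_card_of: "A \<lesssim> B \<longleftrightarrow> ordLeq2 (card_of A) (card_of B)"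
  unfolding lepoll_def using card_of_ordLeq by blast

lemma split_lepoll:
  assumes inf: "infinite S" and eq: "S \<approx> B1 \<union> B2"
  shows "S \<lesssim> B1 \<or> S \<lesssim> B2"
proof (rule ccontr)
  assume "\<not> (S \<lesssim> B1 \<or> S \<lesssim> B2)"
  then have n1: "\<not> ordLeq2 (card_of S) (card_of B1)" and n2: "\<not> ordLeq2 (card_of S) (card_of B2)"
    unfolding lepoll_card_of by auto
  have l1: "ordLess2 (card_of B1) (card_of S)"
    using n1 not_ordLeq_iff_ordLess[OF card_of_Well_order[of B1] card_of_Well_order[of S]] by simp
  have l2: "ordLess2 (card_of B2) (card_of S)"
    using n2 not_ordLeq_iff_ordLess[OF card_of_Well_order[of B2] card_of_Well_order[of S]] by simp
  have "ordLess2 (card_of (B1 \<union> B2)) (card_of S)"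
    by (rule card_of_Un_ordLess_infinite[OF inf l1 l2])
  moreover have "ordLeq2 (card_of S) (card_of (B1 \<union> B2))"
    using eqpoll_imp_lepoll[OF eq] unfolding lepoll_card_of .
  ultimately show False using not_ordLess_ordLeq by auto
qed

theorem mainTheorem16:
  shows "\<not> (\<exists>S. S \<subseteq> range tdeg \<and> uncountable S \<and> entangled2 S (reals_of_degrees S))"
proof
  assume "\<exists>S. S \<subseteq> range tdeg \<and> uncountable S \<and> entangled2 S (reals_of_degrees S)"
  then obtain S where unc: "uncountable S" and ent: "entangled2 S (reals_of_degrees S)" by blast
  define A where "A = reals_of_degrees S"
  have cl: "x \<in> A \<Longrightarrow> x + 1 \<in> A" for x by (simp add: A_def reals_of_degrees_def rdeg_shift)
  have SA: "S \<lesssim> A" and P: "\<forall>C. C \<subseteq> A \<times> A \<longrightarrow> C \<approx> S \<longrightarrow> (\<forall>c\<in>C. fst c \<noteq> snd c) \<longrightarrow>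
       (\<forall>c\<in>C. \<forall>d\<in>C. c \<noteq> d \<longrightarrow> {fst c, snd c} \<inter> {fst d, snd d} = {}) \<longrightarrow>
       (\<exists>w1 z1 w2 z2. (w1, z1) \<in> C \<and> (w2, z2) \<in> C \<and> w1 < w2 \<and> z1 > z2)"
    using ent unfolding entangled2_def A_def by simp_all
  obtain f where f: "inj_on f S" "f ` S \<subseteq> A" using SA unfolding lepoll_def by blast
  have inf: "infinite S" using unc countable_finite by blast
  define Be where "Be = {x \<in> f ` S. even \<lfloor>x\<rfloor>}"
  define Bo where "Bo = {x \<in> f ` S. odd \<lfloor>x\<rfloor>}"
  have "S \<approx> Be \<union> Bo"
  proof -
    have "Be \<union> Bo = f ` S" unfolding Be_def Bo_def by auto
    moreover have "f ` S \<approx> S" using f(1) by (rule inj_on_image_eqpoll_self)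
    ultimately show ?thesis using eqpoll_sym by simp
  qed
  then have disj: "S \<lesssim> Be \<or> S \<lesssim> Bo" using split_lepoll inf by blast
  then obtain E where SE: "S \<lesssim> E" and EA: "E \<subseteq> A" and par: "\<And>x y. x \<in> E \<Longrightarrow> y \<in> E \<Longrightarrow> y \<noteq> x + 1"
  proof (cases "S \<lesssim> Be")
    case True
    show ?thesis
    proof (rule that[OF True])
      show "Be \<subseteq> A" using f(2) unfolding Be_def by blast
      fix x y assume "x \<in> Be" "y \<in> Be"
      then have "even \<lfloor>x\<rfloor>" "even \<lfloor>y\<rfloor>" unfolding Be_def by auto
      show "y \<noteq> x + 1"
      proof
        assume "y = x + 1"
        then have "\<lfloor>y\<rfloor> = \<lfloor>x\<rfloor> + 1" by simp
        with \<open>even \<lfloor>x\<rfloor>\<close> \<open>even \<lfloor>y\<rfloor>\<close> show False by simp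
      qed
    qed
  next
    case False
    then have 2: "S \<lesssim> Bo" using disj by blast
    show ?thesis
    proof (rule that[OF 2])
      show "Bo \<subseteq> A" using f(2) unfolding Bo_def by blast
      fix x y assume "x \<in> Bo" "y \<in> Bo"
      then have "odd \<lfloor>x\<rfloor>" "odd \<lfloor>y\<rfloor>" unfolding Bo_def by auto
      show "y \<noteq> x + 1"
      proof
        assume "y = x + 1"
        then have "\<lfloor>y\<rfloor> = \<lfloor>x\<rfloor> + 1" by simp
        with \<open>odd \<lfloor>x\<rfloor>\<close> \<open>odd \<lfloor>y\<rfloor>\<close> show False by simp
      qed
    qed
  qed
  obtain g where g: "inj_on g S" "g ` S \<subseteq> E" using SE unfolding lepoll_def by blast
  define D where "D = g ` S"
  have DS: "D \<approx> S" unfolding D_def using g(1) inj_on_image_eqpoll_self by blast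
  define C where "C = (\<lambda>x. (x, x + 1)) ` D"
  have "C \<approx> D" unfolding C_def by (rule inj_on_image_eqpoll_self) (auto simp: inj_on_def)
  then have CS: "C \<approx> S" using DS eqpoll_trans by blast
  have DE: "D \<subseteq> E" using g(2) D_def by blast
  have CA: "C \<subseteq> A \<times> A" unfolding C_def using DE EA cl by auto
  have d1: "\<forall>c\<in>C. fst c \<noteq> snd c" unfolding C_def by auto
  have d2: "\<forall>c\<in>C. \<forall>d\<in>C. c \<noteq> d \<longrightarrow> {fst c, snd c} \<inter> {fst d, snd d} = {}"
  proof (intro ballI impI)
    fix c d assume c: "c \<in> C" and d: "d \<in> C" and cd: "c \<noteq> d"
    obtain x where x: "x \<in> D" "c = (x, x+1)" using c C_def by blast
    obtain y where y: "y \<in> D" "d = (y, y+1)" using d C_def by blast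
    have "x \<noteq> y" using cd x y by blast
    moreover have "y \<noteq> x + 1" "x \<noteq> y + 1" using par x y DE by blast+
    ultimately show "{fst c, snd c} \<inter> {fst d, snd d} = {}" using x y by auto
  qed
  have imp: "C \<subseteq> A \<times> A \<longrightarrow> C \<approx> S \<longrightarrow> (\<forall>c\<in>C. fst c \<noteq> snd c) \<longrightarrow>
       (\<forall>c\<in>C. \<forall>d\<in>C. c \<noteq> d \<longrightarrow> {fst c, snd c} \<inter> {fst d, snd d} = {}) \<longrightarrow>
       (\<exists>w1 z1 w2 z2. (w1, z1) \<in> C \<and> (w2, z2) \<in> C \<and> w1 < w2 \<and> z1 > z2)"
    using P by (rule spec)
  from mp[OF mp[OF mp[OF mp[OF imp CA] CS] d1] d2] obtain w1 z1 w2 z2 where "(w1, z1) \<in> C" "(w2, z2) \<in> C" "w1 < w2" "z1 > z2"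
    by blast
  then show False unfolding C_def by auto
qed

end
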